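(* The following set $\mathcal B_0$ of elements is a basis of the complex vector space $\hat{G}_{\Lambda,\Lambda_F}$: (1) all $\bar\Xi^{\lambda_1}_{\lambda_2}\otimes f^{\dot I}_{\dot J}\otimes\Xi^{\lambda_3}_{\lambda_4}$ with $\lambda_1+\lambda_2>2$ and $\lambda_3+\lambda_4>2$; (2) all $\bar\Xi^{\lambda_1}_{\lambda_2}\otimes l^{\dot I}_{\dot J}$ with $\lambda_1\ne1$ or $\lambda_2\ne1$; (3) all $r^{\dot I}_{\dot J}\otimes\Xi^{\lambda_1}_{\lambda_2}$ with $\lambda_1\ne1$ or $\lambda_2\ne1$; (4) all $\sigma^{\dot I}_{\dot J}$; where $\dot I,\dot J$ range over all sequences and the $\lambda_i$ over $\{1,\dots,\Lambda_F\}$.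
   Context: Fix positive integers $\Lambda,\Lambda_F$. A sequence $\dot I=i_1\cdots i_a$ is a finite, possibly empty, sequence of integers in $\{1,\dots,\Lambda\}$; juxtaposition denotes concatenation and $\delta^{\dot I}_{\dot J}$ is $1$ if $\dot I=\dot J$ and $0$ otherwise (similarly for integers). Let $\mathcal{T}_o$ be the complex vector space with basis the symbols $\bar\phi^{\lambda_1}\otimes s^{\dot K}\otimes\phi^{\lambda_2}$, $1\le\lambda_1,\lambda_2\le\Lambda_F$, $\dot K$ any sequence. For all sequences $\dot I,\dot J$ and all $\lambda_i\in\{1,\dots,\Lambda_F\}$ define linear operators on $\mathcal{T}_o$ (each written as a single symbol): first kind: $\bar\Xi^{\lambda_1}_{\lambda_2}\otimes f^{\dot I}_{\dot J}\otimes\Xi^{\lambda_3}_{\lambda_4}(\bar\phi^{\lambda_5}\otimes s^{\dot K}\otimes\phi^{\lambda_6})=\delta^{\lambda_5}_{\lambda_2}\delta^{\dot K}_{\dot J}\delta^{\lambda_6}_{\lambda_4}\,\bar\phi^{\lambda_1}\otimes s^{\dot I}\otimes\phi^{\lambda_3}$; second kind: $\bar\Xi^{\lambda_1}_{\lambda_2}\otimes l^{\dot I}_{\dot J}(\bar\phi^{\lambda_3}\otimes s^{\dot K}\otimes\phi^{\lambda_4})=\delta^{\lambda_3}_{\lambda_2}\sum_{\dot K_1\dot K_2=\dot K}\delta^{\dot K_1}_{\dot J}\,\bar\phi^{\lambda_1}\otimes s^{\dot I\dot K_2}\otimes\phi^{\lambda_4}$; third kind: $r^{\dot I}_{\dot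 J}\otimes\Xi^{\lambda_1}_{\lambda_2}(\bar\phi^{\lambda_3}\otimes s^{\dot K}\otimes\phi^{\lambda_4})=\delta^{\lambda_4}_{\lambda_2}\sum_{\dot K_1\dot K_2=\dot K}\delta^{\dot K_2}_{\dot J}\,\bar\phi^{\lambda_3}\otimes s^{\dot K_1\dot I}\otimes\phi^{\lambda_1}$; fourth kind: $\sigma^{\dot I}_{\dot J}(\bar\phi^{\lambda_1}\otimes s^{\dot K}\otimes\phi^{\lambda_2})=\sum_{\dot K_1\dot K_2\dot K_3=\dot K}\delta^{\dot K_2}_{\dot J}\,\bar\phi^{\lambda_1}\otimes s^{\dot K_1\dot I\dot K_3}\otimes\phi^{\lambda_2}$; sums run over all ways to write $\dot K$ as a concatenation of possibly empty sequences. The open string algebra $\hat{G}_{\Lambda,\Lambda_F}$ is the complex Lie algebra (commutator bracket) of operators on $\mathcal{T}_o$ spanned by all operators of these four kinds; elements are regarded as these operators. *)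

theory Defs
  imports Complex_Main
begin

text \<open>Basis symbols of T_o: (lambda1, K, lambda2) stands for phibar^lambda1 (x) s^K (x) phi^lambda2.
  A linear operator on T_o is represented by its matrix: op b b' is the coefficient of the
  basis symbol b' in op(b).\<close>

type_synonym sym = "nat \<times> nat list \<times> nat"
type_synonym opr = "sym \<Rightarrow> sym \<Rightarrow> complex"

definition seqs :: "nat \<Rightarrow> nat list set" where
  "seqs L = {xs. set xs \<subseteq> {1..L}}"

definition valid_sym :: "nat \<Rightarrow> nat \<Rightarrow> sym \<Rightarrow> bool" where
  "valid_sym L LF b = (case b of (l1, K, l2) \<Rightarrow> l1 \<in> {1..LF} \<and> K \<in> seqs L \<and> l2 \<in> {1..LF})"

definition opF :: "nat \<Rightarrow> nat \<Rightarrow> nat \<Rightarrow> nat \<Rightarrow> nat list \<Rightarrow> nat list \<Rightarrow> nat \<Rightarrow> nat \<Rightarrow> opr" where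
  "opF L LF l1 l2 I J l3 l4 = (\<lambda>(l5, K, l6) b'.
     if valid_sym L LF (l5, K, l6) \<and> l5 = l2 \<and> K = J \<and> l6 = l4 \<and> b' = (l1, I, l3) then 1 else 0)"

definition opL :: "nat \<Rightarrow> nat \<Rightarrow> nat \<Rightarrow> nat \<Rightarrow> nat list \<Rightarrow> nat list \<Rightarrow> opr" where
  "opL L LF l1 l2 I J = (\<lambda>(l3, K, l4) (m1, K', m2).
     if valid_sym L LF (l3, K, l4) \<and> l3 = l2 \<and> m1 = l1 \<and> m2 = l4
     then of_nat (card {(K1, K2). K1 @ K2 = K \<and> K1 = J \<and> K' = I @ K2}) else 0)"

definition opR :: "nat \<Rightarrow> nat \<Rightarrow> nat list \<Rightarrow> nat list \<Rightarrow> nat \<Rightarrow> nat \<Rightarrow> opr" where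
  "opR L LF I J l1 l2 = (\<lambda>(l3, K, l4) (m1, K', m2).
     if valid_sym L LF (l3, K, l4) \<and> l4 = l2 \<and> m1 = l3 \<and> m2 = l1
     then of_nat (card {(K1, K2). K1 @ K2 = K \<and> K2 = J \<and> K' = K1 @ I}) else 0)"

definition opS :: "nat \<Rightarrow> nat \<Rightarrow> nat list \<Rightarrow> nat list \<Rightarrow> opr" where
  "opS L LF I J = (\<lambda>(l1, K, l2) (m1, K', m2).
     if valid_sym L LF (l1, K, l2) \<and> m1 = l1 \<and> m2 = l2
     then of_nat (card {(K1, K2, K3). K1 @ K2 @ K3 = K \<and> K2 = J \<and> K' = K1 @ I @ K3}) else 0)"

definition lincomb :: "(opr \<Rightarrow> complex) \<Rightarrow> opr set \<Rightarrow> opr" where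
  "lincomb c F = (\<lambda>b b'. \<Sum>f\<in>F. c f * f b b')"

definition opspan :: "opr set \<Rightarrow> opr set" where
  "opspan S = {lincomb c F | c F. finite F \<and> F \<subseteq> S}"

definition lin_indep :: "opr set \<Rightarrow> bool" where
  "lin_indep S = (\<forall>F c. finite F \<and> F \<subseteq> S \<and> lincomb c F = (\<lambda>_ _. 0) \<longrightarrow> (\<forall>f\<in>F. c f = 0))"

definition is_basis_of :: "opr set \<Rightarrow> opr set \<Rightarrow> bool" where
  "is_basis_of B V = (B \<subseteq> V \<and> lin_indep B \<and> opspan B = V)"

definition Ghat :: "nat \<Rightarrow> nat \<Rightarrow> opr set" where
  "Ghat L LF = opspan (
      {opF L LF l1 l2 I J l3 l4 | l1 l2 I J l3 l4.
         l1 \<in> {1..LF} \<and> l2 \<in> {1..LF} \<and> l3 \<in> {1..LF} \<and> l4 \<in> {1..LF} \<and> I \<in> seqs L \<and> J \<in> seqs L}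
    \<union> {opL L LF l1 l2 I J | l1 l2 I J. l1 \<in> {1..LF} \<and> l2 \<in> {1..LF} \<and> I \<in> seqs L \<and> J \<in> seqs L}
    \<union> {opR L LF I J l1 l2 | l1 l2 I J. l1 \<in> {1..LF} \<and> l2 \<in> {1..LF} \<and> I \<in> seqs L \<and> J \<in> seqs L}
    \<union> {opS L LF I J | I J. I \<in> seqs L \<and> J \<in> seqs L})"

definition B0 :: "nat \<Rightarrow> nat \<Rightarrow> opr set" where
  "B0 L LF =
      {opF L LF l1 l2 I J l3 l4 | l1 l2 I J l3 l4.
         l1 \<in> {1..LF} \<and> l2 \<in> {1..LF} \<and> l3 \<in> {1..LF} \<and> l4 \<in> {1..LF} \<and> I \<in> seqs L \<and> J \<in> seqs L
         \<and> l1 + l2 > 2 \<and> l3 + l4 > 2}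
    \<union> {opL L LF l1 l2 I J | l1 l2 I J. l1 \<in> {1..LF} \<and> l2 \<in> {1..LF} \<and> I \<in> seqs L \<and> J \<in> seqs L
         \<and> (l1 \<noteq> 1 \<or> l2 \<noteq> 1)}
    \<union> {opR L LF I J l1 l2 | l1 l2 I J. l1 \<in> {1..LF} \<and> l2 \<in> {1..LF} \<and> I \<in> seqs L \<and> J \<in> seqs L
         \<and> (l1 \<noteq> 1 \<or> l2 \<noteq> 1)}
    \<union> {opS L LF I J | I J. I \<in> seqs L \<and> J \<in> seqs L}"

end

theory Submission
  imports Defs
begin


definition cS :: "nat list \<Rightarrow> nat list \<Rightarrow> nat list \<Rightarrow> nat list \<Rightarrow> nat" where
  "cS I J K K' = card {(K1, K2, K3). K1 @ K2 @ K3 = K \<and> K2 = J \<and> K' = K1 @ I @ K3}"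
definition pre :: "nat list \<Rightarrow> nat list \<Rightarrow> nat list \<Rightarrow> nat list \<Rightarrow> bool" where
  "pre I J K K' = (\<exists>X. K = J @ X \<and> K' = I @ X)"
definition suf :: "nat list \<Rightarrow> nat list \<Rightarrow> nat list \<Rightarrow> nat list \<Rightarrow> bool" where
  "suf I J K K' = (\<exists>X. K = X @ J \<and> K' = X @ I)"

lemma fin3: "finite {(K1, K2, K3). K1 @ K2 @ K3 = K \<and> P K1 K2 K3}"
proof -
  have "{(K1, K2, K3). K1 @ K2 @ K3 = K \<and> P K1 K2 K3} \<subseteq>
    (\<lambda>(n,m). (take n K, take m (drop n K), drop m (drop n K))) ` ({..length K} \<times> {..length K})"
  proof
    fix t assume "t \<in> {(K1, K2, K3). K1 @ K2 @ K3 = K \<and> P K1 K2 K3}"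
    then obtain K1 K2 K3 where t: "t = (K1,K2,K3)" "K1 @ K2 @ K3 = K" by auto
    then show "t \<in> (\<lambda>(n,m). (take n K, take m (drop n K), drop m (drop n K))) ` ({..length K} \<times> {..length K})"
      by (intro image_eqI[where x="(length K1, length K2)"]) auto
  qed
  then show ?thesis by (rule finite_subset) auto
qed

lemma cS_Nil: "cS I J [] K' = (if J = [] \<and> K' = I then 1 else 0)"
proof -
  have "{(K1, K2, K3). K1 @ K2 @ K3 = [] \<and> K2 = J \<and> K' = K1 @ I @ K3} = (if J = [] \<and> K' = I then {([],[],[])} else {})"
    by auto
  then show ?thesis unfolding cS_def by simp
qed

lemma cS_Cons: "cS I J (a#K0) K' = (if pre I J (a#K0) K' then 1 else 0) +
   (case K' of [] \<Rightarrow> 0 | b#K0' \<Rightarrow> if a = b then cS I J K0 K0' else 0)"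
proof -
  let ?A = "{(K1, K2, K3). K1 @ K2 @ K3 = a#K0 \<and> K2 = J \<and> K' = K1 @ I @ K3}"
  have fin: "finite ?A" by (rule fin3)
  have "?A = {t\<in>?A. fst t = []} \<union> {t\<in>?A. fst t \<noteq> []}" by auto
  then have c: "card ?A = card {t\<in>?A. fst t = []} + card {t\<in>?A. fst t \<noteq> []}"
    using fin by (metis (no_types, lifting) card_Un_disjoint disjoint_iff finite_Un mem_Collect_eq)
  have e0: "{t\<in>?A. fst t = []} = (if pre I J (a#K0) K' then {([], J, drop (length J) (a#K0))} else {})"
    unfolding pre_def by (auto simp: append_eq_conv_conj) (metis append_take_drop_id)
  have e1: "{t\<in>?A. fst t \<noteq> []} = (case K' of [] \<Rightarrow> {} | b#K0' \<Rightarrow> if a = b then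
       (\<lambda>(x,y,z). (a#x,y,z)) ` {(K1, K2, K3). K1 @ K2 @ K3 = K0 \<and> K2 = J \<and> K0' = K1 @ I @ K3} else {})"
  proof (cases K')
    case Nil
    then show ?thesis by auto
  next
    case (Cons b K0')
    have 1: "t \<in> (\<lambda>(x,y,z). (a#x,y,z)) ` {(K1, K2, K3). K1 @ K2 @ K3 = K0 \<and> K2 = J \<and> K0' = K1 @ I @ K3} \<and> a = b"
      if tA: "t \<in> ?A" and tn: "fst t \<noteq> []" for t
    proof -
      obtain x K1 K2 K3 where t: "t = (x#K1, K2, K3)" using tA tn by (cases t; cases "fst t") (auto simp: neq_Nil_conv)
      then have "x # K1 @ K2 @ K3 = a # K0" "K2 = J" "b # K0' = x # K1 @ I @ K3" using tA Cons by auto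
      then show ?thesis using t by (auto intro!: image_eqI[where x="(K1,K2,K3)"])
    qed
    show ?thesis
    proof (cases "a = b")
      case True
      show ?thesis
      proof (rule equalityI)
        show "{t \<in> ?A. fst t \<noteq> []} \<subseteq> (case K' of [] \<Rightarrow> {} | b#K0' \<Rightarrow> if a = b then
       (\<lambda>(x,y,z). (a#x,y,z)) ` {(K1, K2, K3). K1 @ K2 @ K3 = K0 \<and> K2 = J \<and> K0' = K1 @ I @ K3} else {})"
          using 1 Cons True by auto
      next
        show "(case K' of [] \<Rightarrow> {} | b#K0' \<Rightarrow> if a = b then
       (\<lambda>(x,y,z). (a#x,y,z)) ` {(K1, K2, K3). K1 @ K2 @ K3 = K0 \<and> K2 = J \<and> K0' = K1 @ I @ K3} else {}) \<subseteq> {t \<in> ?A. fst t \<noteq> []}"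
          using Cons True by auto
      qed
    next
      case False
      have "{t \<in> ?A. fst t \<noteq> []} = {}" using 1 False by blast
      then show ?thesis using Cons False by simp
    qed
  qed
  have inj: "inj (\<lambda>(x::nat list,y::nat list,z::nat list). (a#x,y,z))" by (auto simp: inj_def)
  have c0: "card {t\<in>?A. fst t = []} = (if pre I J (a#K0) K' then 1 else 0)" unfolding e0 by simp
  have c1: "card {t\<in>?A. fst t \<noteq> []} = (case K' of [] \<Rightarrow> 0 | b#K0' \<Rightarrow> if a = b then cS I J K0 K0' else 0)"
    unfolding e1 cS_def by (cases K') (auto intro!: card_image simp: inj_on_def)
  show ?thesis using c c0 c1 by (simp add: cS_def)
qed


lemma pre_Cons_Cons: "pre (i#I) (i'#J) (a#K0) (b#K0') = (i' = a \<and> i = b \<and> pre I J K0 K0')"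
  unfolding pre_def by auto

lemma cS_split_pre: "set K \<subseteq> {1..L} \<Longrightarrow>
  cS I J K K' = (if pre I J K K' then 1 else 0) + (\<Sum>i\<in>{1..L}. cS (i#I) (i#J) K K')"
proof (induction K arbitrary: K')
  case Nil
  then show ?case by (simp add: cS_Nil pre_def)
next
  case (Cons a K0)
  have a: "a \<in> {1..L}" and K0: "set K0 \<subseteq> {1..L}" using Cons.prems by auto
  show ?case
  proof (cases K')
    case Nil
    then show ?thesis by (simp add: cS_Cons pre_def)
  next
    case (Cons b K0')
    have "(\<Sum>i\<in>{1..L}. cS (i#I) (i#J) (a#K0) (b#K0')) =
       (\<Sum>i\<in>{1..L}. (if i = a then (if a = b \<and> pre I J K0 K0' then 1 else 0) else 0)
         + (if a = b then cS (i#I) (i#J) K0 K0' else 0))"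
      by (rule sum.cong) (auto simp: cS_Cons pre_Cons_Cons)
    also have "\<dots> = (if a = b \<and> pre I J K0 K0' then 1 else 0) + (if a = b then (\<Sum>i\<in>{1..L}. cS (i#I) (i#J) K0 K0') else 0)"
      using a by (simp add: sum.distrib)
    finally show ?thesis using Cons.IH[OF K0, of K0'] Cons by (auto simp: cS_Cons)
  qed
qed

lemma cS_rev: "cS (rev I) (rev J) (rev K) (rev K') = cS I J K K'"
proof -
  have "{(K1, K2, K3). K1 @ K2 @ K3 = rev K \<and> K2 = rev J \<and> rev K' = K1 @ rev I @ K3}
     = (\<lambda>(x,y,z). (rev z, rev y, rev x)) ` {(K1, K2, K3). K1 @ K2 @ K3 = K \<and> K2 = J \<and> K' = K1 @ I @ K3}"
  proof (rule equalityI)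
    show "{(K1, K2, K3). K1 @ K2 @ K3 = rev K \<and> K2 = rev J \<and> rev K' = K1 @ rev I @ K3}
     \<subseteq> (\<lambda>(x,y,z). (rev z, rev y, rev x)) ` {(K1, K2, K3). K1 @ K2 @ K3 = K \<and> K2 = J \<and> K' = K1 @ I @ K3}"
    proof
      fix t assume "t \<in> {(K1, K2, K3). K1 @ K2 @ K3 = rev K \<and> K2 = rev J \<and> rev K' = K1 @ rev I @ K3}"
      then obtain x y z where t: "t = (x,y,z)" "x @ y @ z = rev K" "y = rev J" "rev K' = x @ rev I @ z" by auto
      have "rev z @ rev y @ rev x = K" using arg_cong[OF t(2), of rev] by simp
      moreover have "K' = rev z @ I @ rev x" using arg_cong[OF t(4), of rev] by simp
      ultimately show "t \<in> (\<lambda>(x,y,z). (rev z, rev y, rev x)) ` {(K1, K2, K3). K1 @ K2 @ K3 = K \<and> K2 = J \<and> K' = K1 @ I @ K3}"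
        using t by (auto intro!: image_eqI[where x="(rev z, rev y, rev x)"])
    qed
  next
    show "(\<lambda>(x,y,z). (rev z, rev y, rev x)) ` {(K1, K2, K3). K1 @ K2 @ K3 = K \<and> K2 = J \<and> K' = K1 @ I @ K3}
      \<subseteq> {(K1, K2, K3). K1 @ K2 @ K3 = rev K \<and> K2 = rev J \<and> rev K' = K1 @ rev I @ K3}"
      by auto
  qed
  moreover have "inj_on (\<lambda>(x::nat list,y::nat list,z::nat list). (rev z, rev y, rev x)) A" for A
    by (auto simp: inj_on_def)
  ultimately show ?thesis unfolding cS_def by (simp add: card_image)
qed

lemma pre_rev: "pre (rev I) (rev J) (rev K) (rev K') = suf I J K K'"
  unfolding pre_def suf_def
  by (metis rev_append rev_rev_ident)

lemma cS_split_suf: "set K \<subseteq> {1..L} \<Longrightarrow>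
  cS I J K K' = (if suf I J K K' then 1 else 0) + (\<Sum>i\<in>{1..L}. cS (I@[i]) (J@[i]) K K')"
proof -
  assume "set K \<subseteq> {1..L}"
  then have r: "set (rev K) \<subseteq> {1..L}" by simp
  have e: "cS (i # rev I) (i # rev J) (rev K) (rev K') = cS (I@[i]) (J@[i]) K K'" for i
    using cS_rev[of "I@[i]" "J@[i]" K K'] by simp
  from cS_split_pre[OF r, of "rev I" "rev J" "rev K'"]
  show ?thesis by (simp only: cS_rev pre_rev e)
qed


lemma pre_split: "set K \<subseteq> {1..L} \<Longrightarrow>
  (if pre I J K K' then 1 else 0::nat) = (if K = J \<and> K' = I then 1 else 0) +
     (\<Sum>i\<in>{1..L}. if pre (I@[i]) (J@[i]) K K' then 1 else 0)"
proof -
  assume KL: "set K \<subseteq> {1..L}"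
  define c where "c = K ! length J"
  have pc: "pre (I@[i]) (J@[i]) K K' \<Longrightarrow> i = c" for i
    unfolding pre_def c_def by auto
  have "(\<Sum>i\<in>{1..L}. if pre (I@[i]) (J@[i]) K K' then 1 else 0::nat) =
        (\<Sum>i\<in>{1..L}. if i = c then (if pre (I@[c]) (J@[c]) K K' then 1 else 0) else 0)"
    by (rule sum.cong) (auto dest: pc)
  also have "\<dots> = (if c \<in> {1..L} \<and> pre (I@[c]) (J@[c]) K K' then 1 else 0)" by simp
  also have "\<dots> = (if pre (I@[c]) (J@[c]) K K' then 1 else 0)"
  proof -
    have "pre (I@[c]) (J@[c]) K K' \<Longrightarrow> c \<in> {1..L}" using KL unfolding pre_def by auto
    then show ?thesis by auto
  qed
  finally have s: "(\<Sum>i\<in>{1..L}. if pre (I@[i]) (J@[i]) K K' then 1 else 0::nat) = (if pre (I@[c]) (J@[c]) K K' then 1 else 0)" .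
  have "pre I J K K' = ((K = J \<and> K' = I) \<or> pre (I@[c]) (J@[c]) K K')"
  proof
    assume "pre I J K K'"
    then obtain X where X: "K = J @ X" "K' = I @ X" unfolding pre_def by auto
    show "(K = J \<and> K' = I) \<or> pre (I@[c]) (J@[c]) K K'"
    proof (cases X)
      case Nil then show ?thesis using X by simp
    next
      case (Cons x X')
      then have "c = x" using X unfolding c_def by simp
      then show ?thesis using X Cons unfolding pre_def by auto
    qed
  next
    assume "(K = J \<and> K' = I) \<or> pre (I@[c]) (J@[c]) K K'"
    then show "pre I J K K'" unfolding pre_def by auto
  qed
  moreover have "\<not> ((K = J \<and> K' = I) \<and> pre (I@[c]) (J@[c]) K K')" unfolding pre_def by auto
  ultimately show ?thesis using s by auto
qed

lemma suf_split: "set K \<subseteq> {1..L} \<Longrightarrow>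
  (if suf I J K K' then 1 else 0::nat) = (if K = J \<and> K' = I then 1 else 0) +
     (\<Sum>i\<in>{1..L}. if suf (i#I) (i#J) K K' then 1 else 0)"
proof -
  assume "set K \<subseteq> {1..L}"
  then have r: "set (rev K) \<subseteq> {1..L}" by simp
  have e: "pre (rev I @ [i]) (rev J @ [i]) (rev K) (rev K') = suf (i#I) (i#J) K K'" for i
    using pre_rev[of "i#I" "i#J" K K'] by simp
  have e2: "(rev K = rev J \<and> rev K' = rev I) = (K = J \<and> K' = I)" by simp
  from pre_split[OF r, of "rev I" "rev J" "rev K'"]
  show ?thesis by (simp only: pre_rev e e2)
qed

lemma opS_eq: "opS L LF I J (l1,K,l2) (m1,K',m2) =
   (if valid_sym L LF (l1,K,l2) \<and> m1 = l1 \<and> m2 = l2 then of_nat (cS I J K K') else 0)"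
  by (simp add: opS_def cS_def)

lemma cardL: "card {(K1, K2). K1 @ K2 = K \<and> K1 = J \<and> K' = I @ K2} = (if pre I J K K' then 1 else 0)"
proof -
  have "{(K1, K2). K1 @ K2 = K \<and> K1 = J \<and> K' = I @ K2} = (if pre I J K K' then {(J, drop (length J) K)} else {})"
    unfolding pre_def by (auto simp: append_eq_conv_conj) (metis append_take_drop_id)
  then show ?thesis by simp
qed

lemma cardR: "card {(K1, K2). K1 @ K2 = K \<and> K2 = J \<and> K' = K1 @ I} = (if suf I J K K' then 1 else 0)"
proof -
  have "{(K1, K2). K1 @ K2 = K \<and> K2 = J \<and> K' = K1 @ I} = (if suf I J K K' then {(take (length K - length J) K, J)} else {})"
  proof (cases "suf I J K K'")
    case True
    then obtain X where X: "K = X @ J" "K' = X @ I" unfolding suf_def by auto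
    have "{(K1, K2). K1 @ K2 = K \<and> K2 = J \<and> K' = K1 @ I} = {(X, J)}" using X by auto
    moreover have "take (length K - length J) K = X" using X by simp
    ultimately show ?thesis using True by simp
  next
    case False
    then show ?thesis unfolding suf_def by auto
  qed
  then show ?thesis by simp
qed

lemma opL_eq: "opL L LF l1 l2 I J (l3,K,l4) (m1,K',m2) =
   (if valid_sym L LF (l3,K,l4) \<and> l3 = l2 \<and> m1 = l1 \<and> m2 = l4 \<and> pre I J K K' then 1 else 0)"
  by (simp add: opL_def cardL)

lemma opR_eq: "opR L LF I J l1 l2 (l3,K,l4) (m1,K',m2) =
   (if valid_sym L LF (l3,K,l4) \<and> l4 = l2 \<and> m1 = l3 \<and> m2 = l1 \<and> suf I J K K' then 1 else 0)"
  by (simp add: opR_def cardR)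

lemma opF_eq: "opF L LF l1 l2 I J l3 l4 (l5,K,l6) (m1,K',m2) =
   (if valid_sym L LF (l5,K,l6) \<and> l5 = l2 \<and> K = J \<and> l6 = l4 \<and> m1 = l1 \<and> K' = I \<and> m2 = l3 then 1 else 0)"
  by (auto simp: opF_def)


lemma valid_setK: "valid_sym L LF (l1,K,l2) \<Longrightarrow> set K \<subseteq> {1..L} \<and> l1 \<in> {1..LF} \<and> l2 \<in> {1..LF}"
  by (auto simp: valid_sym_def seqs_def)

lemma idL: "opS L LF I J b b' = (\<Sum>l\<in>{1..LF}. opL L LF l l I J b b') + (\<Sum>i\<in>{1..L}. opS L LF (i#I) (i#J) b b')"
proof -
  obtain l3 K l4 where b: "b = (l3,K,l4)" by (cases b) auto
  obtain m1 K' m2 where b': "b' = (m1,K',m2)" by (cases b') auto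
  show ?thesis
  proof (cases "valid_sym L LF (l3,K,l4) \<and> m1 = l3 \<and> m2 = l4")
    case True
    then have v: "set K \<subseteq> {1..L}" "l3 \<in> {1..LF}" using valid_setK[of L LF l3 K l4] True by auto
    have "(\<Sum>l\<in>{1..LF}. opL L LF l l I J b b') = (\<Sum>l\<in>{1..LF}. if l = l3 then (if pre I J K K' then 1 else 0) else 0)"
      by (rule sum.cong) (use True in \<open>auto simp: b b' opL_eq\<close>)
    also have "\<dots> = of_nat (if pre I J K K' then 1 else 0)" using v by simp
    finally show ?thesis using True cS_split_pre[OF v(1), of I J K']
      by (simp add: b b' opS_eq)
  next
    case False
    have z: "opS L LF I J b b' = 0" "\<And>l. opL L LF l l I J b b' = 0" "\<And>i. opS L LF (i#I) (i#J) b b' = 0"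
      using False by (auto simp: b b' opS_eq opL_eq)
    show ?thesis by (simp add: z)
  qed
qed

lemma idR: "opS L LF I J b b' = (\<Sum>l\<in>{1..LF}. opR L LF I J l l b b') + (\<Sum>i\<in>{1..L}. opS L LF (I@[i]) (J@[i]) b b')"
proof -
  obtain l3 K l4 where b: "b = (l3,K,l4)" by (cases b) auto
  obtain m1 K' m2 where b': "b' = (m1,K',m2)" by (cases b') auto
  show ?thesis
  proof (cases "valid_sym L LF (l3,K,l4) \<and> m1 = l3 \<and> m2 = l4")
    case True
    then have v: "set K \<subseteq> {1..L}" "l4 \<in> {1..LF}" using valid_setK[of L LF l3 K l4] True by auto
    have "(\<Sum>l\<in>{1..LF}. opR L LF I J l l b b') = (\<Sum>l\<in>{1..LF}. if l = l4 then (if suf I J K K' then 1 else 0) else 0)"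
      by (rule sum.cong) (use True in \<open>auto simp: b b' opR_eq\<close>)
    also have "\<dots> = of_nat (if suf I J K K' then 1 else 0)" using v by simp
    finally show ?thesis using True cS_split_suf[OF v(1), of I J K']
      by (simp add: b b' opS_eq)
  next
    case False
    have z: "opS L LF I J b b' = 0" "\<And>l. opR L LF I J l l b b' = 0" "\<And>i. opS L LF (I@[i]) (J@[i]) b b' = 0"
      using False by (auto simp: b b' opS_eq opR_eq)
    show ?thesis by (simp add: z)
  qed
qed

lemma idFL: "opL L LF l1 l2 I J b b' = (\<Sum>l\<in>{1..LF}. opF L LF l1 l2 I J l l b b') + (\<Sum>i\<in>{1..L}. opL L LF l1 l2 (I@[i]) (J@[i]) b b')"
proof -
  obtain l3 K l4 where b: "b = (l3,K,l4)" by (cases b) auto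
  obtain m1 K' m2 where b': "b' = (m1,K',m2)" by (cases b') auto
  show ?thesis
  proof (cases "valid_sym L LF (l3,K,l4) \<and> l3 = l2 \<and> m1 = l1 \<and> m2 = l4")
    case True
    then have v: "set K \<subseteq> {1..L}" "l4 \<in> {1..LF}" using valid_setK[of L LF l3 K l4] True by auto
    have "(\<Sum>l\<in>{1..LF}. opF L LF l1 l2 I J l l b b') = (\<Sum>l\<in>{1..LF}. if l = l4 then (if K = J \<and> K' = I then 1 else 0) else 0)"
      by (rule sum.cong) (use True in \<open>auto simp: b b' opF_eq\<close>)
    also have "\<dots> = of_nat (if K = J \<and> K' = I then 1 else 0)" using v by simp
    finally have 1: "(\<Sum>l\<in>{1..LF}. opF L LF l1 l2 I J l l b b') = of_nat (if K = J \<and> K' = I then 1 else 0)" .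
    have 2: "(\<Sum>i\<in>{1..L}. opL L LF l1 l2 (I@[i]) (J@[i]) b b') = of_nat (\<Sum>i\<in>{1..L}. if pre (I@[i]) (J@[i]) K K' then 1 else 0)"
      unfolding of_nat_sum by (rule sum.cong) (use True in \<open>auto simp: b b' opL_eq\<close>)
    have 3: "opL L LF l1 l2 I J b b' = of_nat (if pre I J K K' then 1 else 0)"
      using True by (auto simp: b b' opL_eq)
    show ?thesis unfolding 1 2 3 pre_split[OF v(1), of I J K'] by simp
  next
    case False
    have z: "opL L LF l1 l2 I J b b' = 0" "\<And>l. opF L LF l1 l2 I J l l b b' = 0" "\<And>i. opL L LF l1 l2 (I@[i]) (J@[i]) b b' = 0"
      using False by (auto simp: b b' opF_eq opL_eq)
    show ?thesis by (simp add: z)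
  qed
qed

lemma idFR: "opR L LF I J l1 l2 b b' = (\<Sum>l\<in>{1..LF}. opF L LF l l I J l1 l2 b b') + (\<Sum>i\<in>{1..L}. opR L LF (i#I) (i#J) l1 l2 b b')"
proof -
  obtain l3 K l4 where b: "b = (l3,K,l4)" by (cases b) auto
  obtain m1 K' m2 where b': "b' = (m1,K',m2)" by (cases b') auto
  show ?thesis
  proof (cases "valid_sym L LF (l3,K,l4) \<and> l4 = l2 \<and> m1 = l3 \<and> m2 = l1")
    case True
    then have v: "set K \<subseteq> {1..L}" "l3 \<in> {1..LF}" using valid_setK[of L LF l3 K l4] True by auto
    have "(\<Sum>l\<in>{1..LF}. opF L LF l l I J l1 l2 b b') = (\<Sum>l\<in>{1..LF}. if l = l3 then (if K = J \<and> K' = I then 1 else 0) else 0)"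
      by (rule sum.cong) (use True in \<open>auto simp: b b' opF_eq\<close>)
    also have "\<dots> = of_nat (if K = J \<and> K' = I then 1 else 0)" using v by simp
    finally have 1: "(\<Sum>l\<in>{1..LF}. opF L LF l l I J l1 l2 b b') = of_nat (if K = J \<and> K' = I then 1 else 0)" .
    have 2: "(\<Sum>i\<in>{1..L}. opR L LF (i#I) (i#J) l1 l2 b b') = of_nat (\<Sum>i\<in>{1..L}. if suf (i#I) (i#J) K K' then 1 else 0)"
      unfolding of_nat_sum by (rule sum.cong) (use True in \<open>auto simp: b b' opR_eq\<close>)
    have 3: "opR L LF I J l1 l2 b b' = of_nat (if suf I J K K' then 1 else 0)"
      using True by (auto simp: b b' opR_eq)
    show ?thesis unfolding 1 2 3 suf_split[OF v(1), of I J K'] by simp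
  next
    case False
    have z: "opR L LF I J l1 l2 b b' = 0" "\<And>l. opF L LF l l I J l1 l2 b b' = 0" "\<And>i. opR L LF (i#I) (i#J) l1 l2 b b' = 0"
      using False by (auto simp: b b' opF_eq opR_eq)
    show ?thesis by (simp add: z)
  qed
qed



lemma span_base: "f \<in> S \<Longrightarrow> f \<in> opspan S"
proof -
  assume f: "f \<in> S"
  have "lincomb (\<lambda>_. 1) {f} = f" by (simp add: lincomb_def)
  then show ?thesis unfolding opspan_def using f by (metis (mono_tags, lifting) empty_subsetI finite.emptyI finite_insert insert_subsetI mem_Collect_eq)
qed

lemma span_zero: "(\<lambda>_ _. 0) \<in> opspan S"
proof -
  have "lincomb (\<lambda>_. 0) {} = (\<lambda>_ _. 0)" by (simp add: lincomb_def)
  then show ?thesis unfolding opspan_def by (metis (mono_tags, lifting) empty_subsetI finite.emptyI mem_Collect_eq)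
qed

lemma span_scale: "x \<in> opspan S \<Longrightarrow> (\<lambda>b b'. k * x b b') \<in> opspan S"
proof -
  assume "x \<in> opspan S"
  then obtain c F where x: "x = lincomb c F" "finite F" "F \<subseteq> S" unfolding opspan_def by blast
  have "(\<lambda>b b'. k * x b b') = lincomb (\<lambda>f. k * c f) F"
    unfolding x lincomb_def by (simp add: sum_distrib_left mult.assoc)
  then show ?thesis unfolding opspan_def using x by blast
qed

lemma span_add: "x \<in> opspan S \<Longrightarrow> y \<in> opspan S \<Longrightarrow> (\<lambda>b b'. x b b' + y b b') \<in> opspan S"
proof -
  assume "x \<in> opspan S" "y \<in> opspan S"
  then obtain c1 F1 c2 F2 where x: "x = lincomb c1 F1" "finite F1" "F1 \<subseteq> S"
    and y: "y = lincomb c2 F2" "finite F2" "F2 \<subseteq> S" unfolding opspan_def by blast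
  define c where "c f = (if f \<in> F1 then c1 f else 0) + (if f \<in> F2 then c2 f else 0)" for f
  have s1: "(\<Sum>f\<in>F1 \<union> F2. (if f \<in> F1 then c1 f else 0) * f b b') = (\<Sum>f\<in>F1. c1 f * f b b')" for b b'
    by (rule sum.mono_neutral_cong_right) (use x y in auto)
  have s2: "(\<Sum>f\<in>F1 \<union> F2. (if f \<in> F2 then c2 f else 0) * f b b') = (\<Sum>f\<in>F2. c2 f * f b b')" for b b'
    by (rule sum.mono_neutral_cong_right) (use x y in auto)
  have "(\<lambda>b b'. x b b' + y b b') = lincomb c (F1 \<union> F2)"
    unfolding x y lincomb_def c_def by (simp add: distrib_right sum.distrib s1 s2)
  then show ?thesis unfolding opspan_def using x y by blast
qed

lemma span_sum: "finite A \<Longrightarrow> (\<And>a. a \<in> A \<Longrightarrow> h a \<in> opspan S) \<Longrightarrow> (\<lambda>b b'. \<Sum>a\<in>A. h a b b') \<in> opspan S"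
proof (induction A rule: finite_induct)
  case empty
  then show ?case using span_zero by simp
next
  case (insert a A)
  then have "(\<lambda>b b'. h a b b' + (\<lambda>b b'. \<Sum>a\<in>A. h a b b') b b') \<in> opspan S"
    by (intro span_add) auto
  then show ?case using insert by simp
qed

lemma span_diff: "x \<in> opspan S \<Longrightarrow> y \<in> opspan S \<Longrightarrow> (\<lambda>b b'. x b b' - y b b') \<in> opspan S"
proof -
  assume "x \<in> opspan S" "y \<in> opspan S"
  then have "(\<lambda>b b'. x b b' + (\<lambda>b b'. (-1) * y b b') b b') \<in> opspan S"
    by (intro span_add span_scale)
  then show ?thesis by simp
qed

lemma span_lincomb: "finite F \<Longrightarrow> F \<subseteq> opspan S \<Longrightarrow> lincomb c F \<in> opspan S"
proof -
  assume "finite F" "F \<subseteq> opspan S"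
  then have "(\<lambda>b b'. \<Sum>f\<in>F. (\<lambda>b b'. c f * f b b') b b') \<in> opspan S"
    by (intro span_sum span_scale) auto
  then show ?thesis unfolding lincomb_def by simp
qed

lemma span_mono: "S \<subseteq> T \<Longrightarrow> opspan S \<subseteq> opspan T"
  unfolding opspan_def by blast

lemma span_sub: "S \<subseteq> opspan T \<Longrightarrow> opspan S \<subseteq> opspan T"
  unfolding opspan_def[of S] using span_lincomb by blast



definition Gens :: "nat \<Rightarrow> nat \<Rightarrow> opr set" where
 "Gens L LF = {opF L LF l1 l2 I J l3 l4 | l1 l2 I J l3 l4.
         l1 \<in> {1..LF} \<and> l2 \<in> {1..LF} \<and> l3 \<in> {1..LF} \<and> l4 \<in> {1..LF} \<and> I \<in> seqs L \<and> J \<in> seqs L}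
    \<union> {opL L LF l1 l2 I J | l1 l2 I J. l1 \<in> {1..LF} \<and> l2 \<in> {1..LF} \<and> I \<in> seqs L \<and> J \<in> seqs L}
    \<union> {opR L LF I J l1 l2 | l1 l2 I J. l1 \<in> {1..LF} \<and> l2 \<in> {1..LF} \<and> I \<in> seqs L \<and> J \<in> seqs L}
    \<union> {opS L LF I J | I J. I \<in> seqs L \<and> J \<in> seqs L}"

lemma Ghat_Gens: "Ghat L LF = opspan (Gens L LF)"
  unfolding Ghat_def Gens_def ..

lemma B0_Gens: "B0 L LF \<subseteq> Gens L LF"
  unfolding B0_def Gens_def by blast

lemma seqs_Cons: "i \<in> {1..L} \<Longrightarrow> I \<in> seqs L \<Longrightarrow> i # I \<in> seqs L"
  by (simp add: seqs_def)
lemma seqs_snoc: "i \<in> {1..L} \<Longrightarrow> I \<in> seqs L \<Longrightarrow> I @ [i] \<in> seqs L"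
  by (simp add: seqs_def)

lemma split1: "(1::nat) \<le> LF \<Longrightarrow> (\<Sum>l\<in>{1..LF}. T l) = T 1 + (\<Sum>l\<in>{2..LF}. (T l :: complex))"
  by (simp add: sum.atLeast_Suc_atMost numeral_2_eq_2)

lemma S_B0: "I \<in> seqs L \<Longrightarrow> J \<in> seqs L \<Longrightarrow> opS L LF I J \<in> B0 L LF"
  unfolding B0_def by blast
lemma L_B0: "l1 \<in> {1..LF} \<Longrightarrow> l2 \<in> {1..LF} \<Longrightarrow> I \<in> seqs L \<Longrightarrow> J \<in> seqs L \<Longrightarrow> l1 \<noteq> 1 \<or> l2 \<noteq> 1 \<Longrightarrow> opL L LF l1 l2 I J \<in> B0 L LF"
  unfolding B0_def by blast
lemma R_B0: "l1 \<in> {1..LF} \<Longrightarrow> l2 \<in> {1..LF} \<Longrightarrow> I \<in> seqs L \<Longrightarrow> J \<in> seqs L \<Longrightarrow> l1 \<noteq> 1 \<or> l2 \<noteq> 1 \<Longrightarrow> opR L LF I J l1 l2 \<in> B0 L LF"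
  unfolding B0_def by blast
lemma F_B0: "l1 \<in> {1..LF} \<Longrightarrow> l2 \<in> {1..LF} \<Longrightarrow> l3 \<in> {1..LF} \<Longrightarrow> l4 \<in> {1..LF} \<Longrightarrow> I \<in> seqs L \<Longrightarrow> J \<in> seqs L \<Longrightarrow> l1 + l2 > 2 \<Longrightarrow> l3 + l4 > 2 \<Longrightarrow> opF L LF l1 l2 I J l3 l4 \<in> B0 L LF"
  unfolding B0_def by blast

lemma S_in: "I \<in> seqs L \<Longrightarrow> J \<in> seqs L \<Longrightarrow> opS L LF I J \<in> opspan (B0 L LF)"
  by (rule span_base) (rule S_B0)

lemma L_in: assumes LF: "LF \<ge> 1" and l: "l1 \<in> {1..LF}" "l2 \<in> {1..LF}" and IJ: "I \<in> seqs L" "J \<in> seqs L"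
  shows "opL L LF l1 l2 I J \<in> opspan (B0 L LF)"
proof (cases "l1 \<noteq> 1 \<or> l2 \<noteq> 1")
  case True
  then show ?thesis by (intro span_base L_B0 R_B0) (use l IJ True in auto)
next
  case False
  then have l11: "l1 = 1" "l2 = 1" by auto
  have e: "opL L LF 1 1 I J = (\<lambda>b b'. opS L LF I J b b' - (\<Sum>i\<in>{1..L}. opS L LF (i#I) (i#J) b b')
             - (\<Sum>l\<in>{2..LF}. opL L LF l l I J b b'))"
    using idL[of L LF I J] split1[OF LF] by (auto simp: fun_eq_iff algebra_simps)
  have "(\<lambda>b b'. opS L LF I J b b' - (\<Sum>i\<in>{1..L}. opS L LF (i#I) (i#J) b b')
             - (\<Sum>l\<in>{2..LF}. opL L LF l l I J b b')) \<in> opspan (B0 L LF)"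
    apply (intro span_diff span_sum S_in IJ finite_atLeastAtMost)
      apply (auto intro: seqs_Cons IJ)
    apply (rule span_base)
    using IJ by (auto intro!: L_B0 R_B0)
  then show ?thesis using e l11 by simp
qed

lemma R_in: assumes LF: "LF \<ge> 1" and l: "l1 \<in> {1..LF}" "l2 \<in> {1..LF}" and IJ: "I \<in> seqs L" "J \<in> seqs L"
  shows "opR L LF I J l1 l2 \<in> opspan (B0 L LF)"
proof (cases "l1 \<noteq> 1 \<or> l2 \<noteq> 1")
  case True
  then show ?thesis by (intro span_base L_B0 R_B0) (use l IJ True in auto)
next
  case False
  then have l11: "l1 = 1" "l2 = 1" by auto
  have e: "opR L LF I J 1 1 = (\<lambda>b b'. opS L LF I J b b' - (\<Sum>i\<in>{1..L}. opS L LF (I@[i]) (J@[i]) b b')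
             - (\<Sum>l\<in>{2..LF}. opR L LF I J l l b b'))"
    using idR[of L LF I J] split1[OF LF] by (auto simp: fun_eq_iff algebra_simps)
  have "(\<lambda>b b'. opS L LF I J b b' - (\<Sum>i\<in>{1..L}. opS L LF (I@[i]) (J@[i]) b b')
             - (\<Sum>l\<in>{2..LF}. opR L LF I J l l b b')) \<in> opspan (B0 L LF)"
    apply (intro span_diff span_sum S_in IJ finite_atLeastAtMost)
      apply (auto intro: seqs_snoc IJ)
    apply (rule span_base)
    using IJ by (auto intro!: L_B0 R_B0)
  then show ?thesis using e l11 by simp
qed

lemma F_in1: assumes LF: "LF \<ge> 1" and l: "l1 \<in> {1..LF}" "l2 \<in> {1..LF}" and IJ: "I \<in> seqs L" "J \<in> seqs L"
  and ne: "l1 \<noteq> 1 \<or> l2 \<noteq> 1"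
  shows "opF L LF l1 l2 I J 1 1 \<in> opspan (B0 L LF)"
proof -
  have e: "opF L LF l1 l2 I J 1 1 = (\<lambda>b b'. opL L LF l1 l2 I J b b' - (\<Sum>i\<in>{1..L}. opL L LF l1 l2 (I@[i]) (J@[i]) b b')
             - (\<Sum>l\<in>{2..LF}. opF L LF l1 l2 I J l l b b'))"
    using idFL[of L LF l1 l2 I J] split1[OF LF] by (auto simp: fun_eq_iff algebra_simps)
  have "(\<lambda>b b'. opL L LF l1 l2 I J b b' - (\<Sum>i\<in>{1..L}. opL L LF l1 l2 (I@[i]) (J@[i]) b b')
             - (\<Sum>l\<in>{2..LF}. opF L LF l1 l2 I J l l b b')) \<in> opspan (B0 L LF)"
    apply (intro span_diff span_sum L_in LF l IJ finite_atLeastAtMost)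
      apply (auto intro: seqs_snoc IJ)
    apply (rule span_base)
    using IJ l ne by (auto intro!: F_B0)
  then show ?thesis using e by simp
qed

lemma F_in2: assumes LF: "LF \<ge> 1" and l: "l1 \<in> {1..LF}" "l2 \<in> {1..LF}" and IJ: "I \<in> seqs L" "J \<in> seqs L"
  and ne: "l1 \<noteq> 1 \<or> l2 \<noteq> 1"
  shows "opF L LF 1 1 I J l1 l2 \<in> opspan (B0 L LF)"
proof -
  have e: "opF L LF 1 1 I J l1 l2 = (\<lambda>b b'. opR L LF I J l1 l2 b b' - (\<Sum>i\<in>{1..L}. opR L LF (i#I) (i#J) l1 l2 b b')
             - (\<Sum>l\<in>{2..LF}. opF L LF l l I J l1 l2 b b'))"
    using idFR[of L LF I J l1 l2] split1[OF LF] by (auto simp: fun_eq_iff algebra_simps)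
  have "(\<lambda>b b'. opR L LF I J l1 l2 b b' - (\<Sum>i\<in>{1..L}. opR L LF (i#I) (i#J) l1 l2 b b')
             - (\<Sum>l\<in>{2..LF}. opF L LF l l I J l1 l2 b b')) \<in> opspan (B0 L LF)"
    apply (intro span_diff span_sum R_in LF l IJ finite_atLeastAtMost)
      apply (auto intro: seqs_Cons IJ)
    apply (rule span_base)
    using IJ l ne by (auto intro!: F_B0)
  then show ?thesis using e by simp
qed

lemma F_in: assumes LF: "LF \<ge> 1" and l: "l1 \<in> {1..LF}" "l2 \<in> {1..LF}" "l3 \<in> {1..LF}" "l4 \<in> {1..LF}"
  and IJ: "I \<in> seqs L" "J \<in> seqs L"
  shows "opF L LF l1 l2 I J l3 l4 \<in> opspan (B0 L LF)"
proof (cases "l1 \<noteq> 1 \<or> l2 \<noteq> 1")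
  case True
  show ?thesis
  proof (cases "l3 \<noteq> 1 \<or> l4 \<noteq> 1")
    case True2: True
    show ?thesis by (intro span_base F_B0) (use l IJ True True2 in auto)
  next
    case False
    then show ?thesis using F_in1[OF LF l(1,2) IJ True] by auto
  qed
next
  case False
  then have l11: "l1 = 1" "l2 = 1" by auto
  show ?thesis
  proof (cases "l3 \<noteq> 1 \<or> l4 \<noteq> 1")
    case True2: True
    show ?thesis using F_in2[OF LF l(3,4) IJ True2] l11 by simp
  next
    case False2: False
    then have l33: "l3 = 1" "l4 = 1" by auto
    have e: "opF L LF 1 1 I J 1 1 = (\<lambda>b b'. opL L LF 1 1 I J b b' - (\<Sum>i\<in>{1..L}. opL L LF 1 1 (I@[i]) (J@[i]) b b')
             - (\<Sum>l\<in>{2..LF}. opF L LF 1 1 I J l l b b'))"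
      using idFL[of L LF 1 1 I J] split1[OF LF] by (auto simp: fun_eq_iff algebra_simps)
    have Fl: "opF L LF 1 1 I J l l \<in> opspan (B0 L LF)" if "l \<in> {2..LF}" for l
      using F_in2[OF LF _ _ IJ, of l l] that by auto
    have "(\<lambda>b b'. opL L LF 1 1 I J b b' - (\<Sum>i\<in>{1..L}. opL L LF 1 1 (I@[i]) (J@[i]) b b')
             - (\<Sum>l\<in>{2..LF}. opF L LF 1 1 I J l l b b')) \<in> opspan (B0 L LF)"
      using LF by (intro span_diff span_sum L_in LF IJ finite_atLeastAtMost Fl) (auto intro: seqs_snoc IJ)
    then show ?thesis using e l11 l33 by simp
  qed
qed

lemma spanning: assumes "LF \<ge> 1" shows "opspan (B0 L LF) = Ghat L LF"
proof
  show "opspan (B0 L LF) \<subseteq> Ghat L LF" unfolding Ghat_Gens by (rule span_mono[OF B0_Gens])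
next
  have "Gens L LF \<subseteq> opspan (B0 L LF)"
    unfolding Gens_def
    apply (intro Un_least subsetI)
    using S_in L_in[OF assms] R_in[OF assms] F_in[OF assms] by auto
  then show "Ghat L LF \<subseteq> opspan (B0 L LF)" unfolding Ghat_Gens by (rule span_sub)
qed

lemma B0_sub: "B0 L LF \<subseteq> Ghat L LF"
  unfolding Ghat_Gens using B0_Gens span_base by blast



lemma pick_coef:
  assumes fin: "finite F" and z: "lincomb c F = (\<lambda>_ _. 0)" and f: "f \<in> F" and one: "f b b' = 1"
    and oth: "\<And>g. g \<in> F \<Longrightarrow> g \<noteq> f \<Longrightarrow> c g = 0 \<or> g b b' = 0"
  shows "c f = 0"
proof -
  have "0 = (\<Sum>g\<in>F. c g * g b b')" using fun_cong[OF fun_cong[OF z, of b], of b'] by (simp add: lincomb_def)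
  also have "\<dots> = c f * f b b' + (\<Sum>g\<in>F - {f}. c g * g b b')" using fin f by (simp add: sum.remove)
  also have "(\<Sum>g\<in>F - {f}. c g * g b b') = 0" by (rule sum.neutral) (use oth in auto)
  finally show ?thesis using one by simp
qed

lemma cS_nz: "cS I J K K' \<noteq> 0 \<Longrightarrow> \<exists>K1 K3. K = K1 @ J @ K3 \<and> K' = K1 @ I @ K3"
proof -
  assume "cS I J K K' \<noteq> 0"
  then have "{(K1, K2, K3). K1 @ K2 @ K3 = K \<and> K2 = J \<and> K' = K1 @ I @ K3} \<noteq> {}"
    unfolding cS_def by (metis card.empty)
  then obtain t where "t \<in> {(K1, K2, K3). K1 @ K2 @ K3 = K \<and> K2 = J \<and> K' = K1 @ I @ K3}" by blast
  then show ?thesis by auto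
qed

lemma cS_pos: "0 < cS I J K K' \<Longrightarrow> \<exists>K1 K3. K = K1 @ J @ K3 \<and> K' = K1 @ I @ K3"
  using cS_nz by auto

lemma cS_self: "cS I J J I = 1"
proof -
  have "{(K1, K2, K3). K1 @ K2 @ K3 = J \<and> K2 = J \<and> I = K1 @ I @ K3} = {([], J, [])}"
  proof (rule equalityI)
    show "{(K1, K2, K3). K1 @ K2 @ K3 = J \<and> K2 = J \<and> I = K1 @ I @ K3} \<subseteq> {([], J, [])}"
    proof
      fix t assume "t \<in> {(K1, K2, K3). K1 @ K2 @ K3 = J \<and> K2 = J \<and> I = K1 @ I @ K3}"
      then obtain x y z where t: "t = (x,y,z)" "x @ y @ z = J" "y = J" by auto
      have "length (x @ y @ z) = length J" using t(2) by simp
      then have "length x + length z = 0" using t(3) by (simp del: append_same_eq)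
      then have "x = []" "z = []" by auto
      then show "t \<in> {([], J, [])}" using t by simp
    qed
  qed auto
  then show ?thesis unfolding cS_def by simp
qed

lemma valid1: "LF \<ge> 1 \<Longrightarrow> J \<in> seqs L \<Longrightarrow> a \<in> {1..LF} \<Longrightarrow> a' \<in> {1..LF} \<Longrightarrow> valid_sym L LF (a, J, a')"
  by (simp add: valid_sym_def)

lemma S_test_other: "g \<in> B0 L LF \<Longrightarrow> g (1,J,1) (1,I,1) \<noteq> 0 \<Longrightarrow>
   \<exists>I' J'. g = opS L LF I' J' \<and> I' \<in> seqs L \<and> J' \<in> seqs L \<and> (\<exists>K1 K3. J = K1 @ J' @ K3 \<and> I = K1 @ I' @ K3)"
  unfolding B0_def
  apply (elim UnE CollectE exE conjE)
  apply (auto simp: opF_eq opL_eq opR_eq opS_eq split: if_splits dest!: cS_pos)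
  done

lemma L_test_other: "g \<in> B0 L LF \<Longrightarrow> g (a,J,1) (a',I,1) \<noteq> 0 \<Longrightarrow>
   (\<exists>I' J'. g = opS L LF I' J' \<and> I' \<in> seqs L \<and> J' \<in> seqs L) \<or>
   (\<exists>I' J' X. g = opL L LF a' a I' J' \<and> I' \<in> seqs L \<and> J' \<in> seqs L \<and> J = J' @ X \<and> I = I' @ X)"
  unfolding B0_def
  apply (elim UnE CollectE exE conjE)
  apply (auto simp: opF_eq opL_eq opR_eq opS_eq pre_def split: if_splits)
  apply blast+
  done

lemma R_test_other: "g \<in> B0 L LF \<Longrightarrow> g (1,J,a) (1,I,a') \<noteq> 0 \<Longrightarrow>
   (\<exists>I' J'. g = opS L LF I' J' \<and> I' \<in> seqs L \<and> J' \<in> seqs L) \<or>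
   (\<exists>I' J' X. g = opR L LF I' J' a' a \<and> I' \<in> seqs L \<and> J' \<in> seqs L \<and> J = X @ J' \<and> I = X @ I')"
  unfolding B0_def
  apply (elim UnE CollectE exE conjE)
  apply (auto simp: opF_eq opL_eq opR_eq opS_eq suf_def split: if_splits)
  apply blast+
  done

lemma F_test_other: "g \<in> B0 L LF \<Longrightarrow> g (l2,J,l4) (l1,I,l3) \<noteq> 0 \<Longrightarrow>
   (\<exists>I' J'. g = opS L LF I' J' \<and> I' \<in> seqs L \<and> J' \<in> seqs L) \<or>
   (\<exists>a' a I' J'. g = opL L LF a' a I' J' \<and> I' \<in> seqs L \<and> J' \<in> seqs L \<and> a' \<in> {1..LF} \<and> a \<in> {1..LF}) \<or>
   (\<exists>a' a I' J'. g = opR L LF I' J' a' a \<and> I' \<in> seqs L \<and> J' \<in> seqs L \<and> a' \<in> {1..LF} \<and> a \<in> {1..LF}) \<or>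
   g = opF L LF l1 l2 I J l3 l4"
  unfolding B0_def
  apply (elim UnE CollectE exE conjE)
  subgoal by (rule disjI2, rule disjI2, rule disjI2) (auto simp: opF_eq split: if_splits)
  subgoal by (rule disjI2, rule disjI1) blast
  subgoal by (rule disjI2, rule disjI2, rule disjI1) blast
  subgoal by (rule disjI1) blast
  done



lemma pre_refl: "pre I J J I" unfolding pre_def by auto
lemma suf_refl: "suf I J J I" unfolding suf_def by auto

lemma indep: assumes LF: "LF \<ge> 1" shows "lin_indep (B0 L LF)"
  unfolding lin_indep_def
proof (intro allI impI)
  fix F c assume H: "finite F \<and> F \<subseteq> B0 L LF \<and> lincomb c F = (\<lambda>_ _. 0)"
  then have fin: "finite F" and sub: "F \<subseteq> B0 L LF" and z: "lincomb c F = (\<lambda>_ _. 0)" by auto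
  have PS: "\<forall>f I J. f \<in> F \<longrightarrow> I \<in> seqs L \<longrightarrow> J \<in> seqs L \<longrightarrow> f = opS L LF I J \<longrightarrow> length J = n \<longrightarrow> c f = 0" for n
  proof (induction n rule: less_induct)
    case (less n)
    show ?case
    proof (intro allI impI)
      fix f I J assume f: "f \<in> F" and I: "I \<in> seqs L" and J: "J \<in> seqs L" and fe: "f = opS L LF I J" and n: "length J = n"
      show "c f = 0"
      proof (rule pick_coef[OF fin z f, of "(1,J,1)" "(1,I,1)"])
        show "f (1,J,1) (1,I,1) = 1" using fe valid1[OF LF J, of 1 1] LF by (simp add: opS_eq cS_self)
      next
        fix g assume g: "g \<in> F" "g \<noteq> f"
        have gB: "g \<in> B0 L LF" using g sub by blast
        show "c g = 0 \<or> g (1,J,1) (1,I,1) = 0"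
        proof (rule disjCI)
          assume nz: "g (1,J,1) (1,I,1) \<noteq> 0"
          obtain I' J' K1 K3 where gs: "g = opS L LF I' J'" "I' \<in> seqs L" "J' \<in> seqs L" "J = K1@J'@K3" "I = K1@I'@K3"
            using S_test_other[OF gB nz] by blast
          have "K1 \<noteq> [] \<or> K3 \<noteq> []"
          proof (rule ccontr)
            assume "\<not> (K1 \<noteq> [] \<or> K3 \<noteq> [])"
            then have "J' = J" "I' = I" using gs by auto
            then show False using g gs fe by simp
          qed
          then have "length J' < n" using gs n by auto
          then show "c g = 0" using less.IH g gs by blast
        qed
      qed
    qed
  qed
  have PS': "c f = 0" if "f \<in> F" "I \<in> seqs L" "J \<in> seqs L" "f = opS L LF I J" for f I J
    using PS that by blast
  have PL: "\<forall>f a' a I J. f \<in> F \<longrightarrow> a' \<in> {1..LF} \<longrightarrow> a \<in> {1..LF} \<longrightarrow> I \<in> seqs L \<longrightarrow> J \<in> seqs L \<longrightarrow>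
      f = opL L LF a' a I J \<longrightarrow> length J = n \<longrightarrow> c f = 0" for n
  proof (induction n rule: less_induct)
    case (less n)
    show ?case
    proof (intro allI impI)
      fix f a' a I J assume f: "f \<in> F" and a': "a' \<in> {1..LF}" and a: "a \<in> {1..LF}" and I: "I \<in> seqs L" and J: "J \<in> seqs L"
        and fe: "f = opL L LF a' a I J" and n: "length J = n"
      show "c f = 0"
      proof (rule pick_coef[OF fin z f, of "(a,J,1)" "(a',I,1)"])
        show "f (a,J,1) (a',I,1) = 1" using fe valid1[OF LF J a, of 1] LF by (simp add: opL_eq pre_refl)
      next
        fix g assume g: "g \<in> F" "g \<noteq> f"
        have gB: "g \<in> B0 L LF" using g sub by blast
        show "c g = 0 \<or> g (a,J,1) (a',I,1) = 0"
        proof (rule disjCI)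
          assume nz: "g (a,J,1) (a',I,1) \<noteq> 0"
          from L_test_other[OF gB nz]
          have "(\<exists>I' J'. g = opS L LF I' J' \<and> I' \<in> seqs L \<and> J' \<in> seqs L) \<or>
            (\<exists>I' J' X. g = opL L LF a' a I' J' \<and> I' \<in> seqs L \<and> J' \<in> seqs L \<and> J = J' @ X \<and> I = I' @ X)" by blast
          then show "c g = 0"
          proof
            assume "\<exists>I' J'. g = opS L LF I' J' \<and> I' \<in> seqs L \<and> J' \<in> seqs L"
            then show ?thesis using PS' g by blast
          next
            assume "\<exists>I' J' X. g = opL L LF a' a I' J' \<and> I' \<in> seqs L \<and> J' \<in> seqs L \<and> J = J' @ X \<and> I = I' @ X"
            then obtain I' J' X where gs: "g = opL L LF a' a I' J'" "I' \<in> seqs L" "J' \<in> seqs L" "J = J' @ X" "I = I' @ X" by blast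
            have "X \<noteq> []"
            proof
              assume "X = []"
              then show False using g gs fe by simp
            qed
            then have "length J' < n" using gs n by auto
            then show "c g = 0" using less.IH g gs a a' by blast
          qed
        qed
      qed
    qed
  qed
  have PL': "c f = 0" if "f \<in> F" "a' \<in> {1..LF}" "a \<in> {1..LF}" "I \<in> seqs L" "J \<in> seqs L" "f = opL L LF a' a I J" for f a' a I J
    using PL that by blast
  have PR: "\<forall>f a' a I J. f \<in> F \<longrightarrow> a' \<in> {1..LF} \<longrightarrow> a \<in> {1..LF} \<longrightarrow> I \<in> seqs L \<longrightarrow> J \<in> seqs L \<longrightarrow>
      f = opR L LF I J a' a \<longrightarrow> length J = n \<longrightarrow> c f = 0" for n
  proof (induction n rule: less_induct)
    case (less n)
    show ?case
    proof (intro allI impI)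
      fix f a' a I J assume f: "f \<in> F" and a': "a' \<in> {1..LF}" and a: "a \<in> {1..LF}" and I: "I \<in> seqs L" and J: "J \<in> seqs L"
        and fe: "f = opR L LF I J a' a" and n: "length J = n"
      show "c f = 0"
      proof (rule pick_coef[OF fin z f, of "(1,J,a)" "(1,I,a')"])
        show "f (1,J,a) (1,I,a') = 1" using fe valid1[OF LF J _ a, of 1] LF by (simp add: opR_eq suf_refl)
      next
        fix g assume g: "g \<in> F" "g \<noteq> f"
        have gB: "g \<in> B0 L LF" using g sub by blast
        show "c g = 0 \<or> g (1,J,a) (1,I,a') = 0"
        proof (rule disjCI)
          assume nz: "g (1,J,a) (1,I,a') \<noteq> 0"
          from R_test_other[OF gB nz]
          have "(\<exists>I' J'. g = opS L LF I' J' \<and> I' \<in> seqs L \<and> J' \<in> seqs L) \<or>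
            (\<exists>I' J' X. g = opR L LF I' J' a' a \<and> I' \<in> seqs L \<and> J' \<in> seqs L \<and> J = X @ J' \<and> I = X @ I')" by blast
          then show "c g = 0"
          proof
            assume "\<exists>I' J'. g = opS L LF I' J' \<and> I' \<in> seqs L \<and> J' \<in> seqs L"
            then show ?thesis using PS' g by blast
          next
            assume "\<exists>I' J' X. g = opR L LF I' J' a' a \<and> I' \<in> seqs L \<and> J' \<in> seqs L \<and> J = X @ J' \<and> I = X @ I'"
            then obtain I' J' X where gs: "g = opR L LF I' J' a' a" "I' \<in> seqs L" "J' \<in> seqs L" "J = X @ J'" "I = X @ I'" by blast
            have "X \<noteq> []"
            proof
              assume "X = []"
              then show False using g gs fe by simp
            qed
            then have "length J' < n" using gs n by auto
            then show "c g = 0" using less.IH g gs a a' by blast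
          qed
        qed
      qed
    qed
  qed
  have PR': "c f = 0" if "f \<in> F" "a' \<in> {1..LF}" "a \<in> {1..LF}" "I \<in> seqs L" "J \<in> seqs L" "f = opR L LF I J a' a" for f a' a I J
    using PR that by blast
  have PF: "c f = 0" if f: "f \<in> F" and l: "l1 \<in> {1..LF}" "l2 \<in> {1..LF}" "l3 \<in> {1..LF}" "l4 \<in> {1..LF}"
    and J: "J \<in> seqs L" and fe: "f = opF L LF l1 l2 I J l3 l4" for f l1 l2 l3 l4 I J
  proof (rule pick_coef[OF fin z f, of "(l2,J,l4)" "(l1,I,l3)"])
    show "f (l2,J,l4) (l1,I,l3) = 1" using fe valid1[OF LF J l(2) l(4)] by (simp add: opF_eq)
  next
    fix g assume g: "g \<in> F" "g \<noteq> f"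
        have gB: "g \<in> B0 L LF" using g sub by blast
    show "c g = 0 \<or> g (l2,J,l4) (l1,I,l3) = 0"
    proof (rule disjCI)
      assume nz: "g (l2,J,l4) (l1,I,l3) \<noteq> 0"
      from F_test_other[OF gB nz] show "c g = 0"
      proof (elim disjE exE conjE)
        fix I' J' assume "g = opS L LF I' J'" "I' \<in> seqs L" "J' \<in> seqs L"
        then show ?thesis using PS' g by blast
      next
        fix a' a I' J' assume "g = opL L LF a' a I' J'" "I' \<in> seqs L" "J' \<in> seqs L" "a' \<in> {1..LF}" "a \<in> {1..LF}"
        then show ?thesis using PL'[OF g(1)] by blast
      next
        fix a' a I' J' assume "g = opR L LF I' J' a' a" "I' \<in> seqs L" "J' \<in> seqs L" "a' \<in> {1..LF}" "a \<in> {1..LF}"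
        then show ?thesis using PR'[OF g(1)] by blast
      next
        assume "g = opF L LF l1 l2 I J l3 l4"
        then show ?thesis using g fe by simp
      qed
    qed
  qed
  show "\<forall>f\<in>F. c f = 0"
  proof
    fix f assume f: "f \<in> F"
    then have "f \<in> B0 L LF" using sub by blast
    then show "c f = 0" unfolding B0_def
      apply (elim UnE CollectE exE conjE)
      subgoal for l1 l2 I J l3 l4 by (rule PF[of f l1 l2 l3 l4 J I]) (use f in auto)
      subgoal for l1 l2 I J by (rule PL'[of f l1 l2 I J]) (use f in auto)
      subgoal for l1 l2 I J by (rule PR'[of f l1 l2 I J]) (use f in auto)
      subgoal for I J by (rule PS'[of f I J]) (use f in auto)
      done
  qed
qed


theorem proposition1:
  fixes L LF :: nat
  assumes "L \<ge> 1" and "LF \<ge> 1"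
  shows "is_basis_of (B0 L LF) (Ghat L LF)"
  unfolding is_basis_of_def using B0_sub indep[OF assms(2)] spanning[OF assms(2)] by blast

end
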